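(* Let $X$ be a finite set and $r,k$ integers with $r\ge 3$, $k\ge r$, $k\ge 5$ and $|X|-k\ge\max(7,r)$. Let $\mathcal{F}$ be a clone on $X$ such that either $f_{r;1,2}\in\mathcal{F}$, or (weaker) for every one-to-one $\bar a\in X^r$ there is $f_{\bar a}\in\mathcal{F}$ with $f_{\bar a}(\bar a)=a_2$ and $f_{\bar a}(\bar b)=b_1$ for every $\bar b\in X^r$ that is not one-to-one. Let $\mathfrak{C}$ be a nonempty symmetric family of choice functions for $\binom{X}{k}$ which is closed under every $f\in\mathcal{F}$. Then $\mathfrak{C}$ is full, i.e. every choice function for $\binom{X}{k}$ belongs to $\mathfrak{C}$.
   Context: A clone on $X$: set of finitary operations on $X$ containing all projections and closed under composition. $\binom{X}{k}=\{Y\subseteq X:|Y|=k\}$; a choice function $c$ satisfies $c(Y)\in Y$. Symmetric: for every permutation $\pi$ of $X$ and $c\in\mathfrak{C}$, $(\pi*c)(Y)=\pi^{-1}(c(\pi(Y)))$ is in $\mathfrak{C}$. $\mathfrak{C}$ is closed under an $n$-place $f$ if for all $c_1,\dots,c_n\in\mathfrak{C}$, the function $Y\mapsto f(c_1(Y),\dots,c_n(Y))$ is in $\mathfrak{C}$. $f_{r;1,2}(\bar x)=x_1$ if $\bar x\in X^r$ has a repetition and $x_2$ otherwise. *)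

theory Defs
  imports Main
begin

(* An n-place operation on X is represented as a pair (n, f) with f :: 'a list => 'a,
   intended to be applied to argument lists of length n whose entries lie in X. *)

definition ksubsets :: "'a set \<Rightarrow> nat \<Rightarrow> 'a set set" where
  "ksubsets X k = {Y. Y \<subseteq> X \<and> card Y = k}"

definition is_clone :: "'a set \<Rightarrow> (nat \<times> ('a list \<Rightarrow> 'a)) set \<Rightarrow> bool" where
  "is_clone X F \<longleftrightarrow>
     (\<forall>(n, f)\<in>F. \<forall>xs. length xs = n \<and> set xs \<subseteq> X \<longrightarrow> f xs \<in> X) \<and>
     (\<forall>n i. i < n \<longrightarrow> (n, \<lambda>xs. xs ! i) \<in> F) \<and>
     (\<forall>n f m g. (n, f) \<in> F \<and> (\<forall>i<n. (m, g i) \<in> F) \<longrightarrow>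
        (m, \<lambda>xs. f (map (\<lambda>i. g i xs) [0..<n])) \<in> F)"

definition choice_fun :: "'a set \<Rightarrow> nat \<Rightarrow> ('a set \<Rightarrow> 'a) \<Rightarrow> bool" where
  "choice_fun X k c \<longleftrightarrow> (\<forall>Y\<in>ksubsets X k. c Y \<in> Y) \<and> (\<forall>Y. Y \<notin> ksubsets X k \<longrightarrow> c Y = undefined)"

definition perm_act :: "'a set \<Rightarrow> nat \<Rightarrow> ('a \<Rightarrow> 'a) \<Rightarrow> ('a set \<Rightarrow> 'a) \<Rightarrow> ('a set \<Rightarrow> 'a)" where
  "perm_act X k \<pi> c = (\<lambda>Y. if Y \<in> ksubsets X k then the_inv_into X \<pi> (c (\<pi> ` Y)) else undefined)"

definition symmetric_family :: "'a set \<Rightarrow> nat \<Rightarrow> ('a set \<Rightarrow> 'a) set \<Rightarrow> bool" where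
  "symmetric_family X k C \<longleftrightarrow> (\<forall>\<pi> c. bij_betw \<pi> X X \<and> c \<in> C \<longrightarrow> perm_act X k \<pi> c \<in> C)"

definition closed_under :: "'a set \<Rightarrow> nat \<Rightarrow> ('a set \<Rightarrow> 'a) set \<Rightarrow> nat \<Rightarrow> ('a list \<Rightarrow> 'a) \<Rightarrow> bool" where
  "closed_under X k C n f \<longleftrightarrow>
     (\<forall>cs. (\<forall>i<n. cs i \<in> C) \<longrightarrow>
        (\<lambda>Y. if Y \<in> ksubsets X k then f (map (\<lambda>i. cs i Y) [0..<n]) else undefined) \<in> C)"

definition f_r12 :: "'a list \<Rightarrow> 'a" where
  "f_r12 xs = (if distinct xs then xs ! 1 else xs ! 0)"

definition agree_on :: "'a set \<Rightarrow> nat \<Rightarrow> ('a list \<Rightarrow> 'a) \<Rightarrow> ('a list \<Rightarrow> 'a) \<Rightarrow> bool" where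
  "agree_on X n f g \<longleftrightarrow> (\<forall>xs. length xs = n \<and> set xs \<subseteq> X \<longrightarrow> f xs = g xs)"

end

theory Submission
  imports Defs
begin

definition swp :: "'a \<Rightarrow> 'a \<Rightarrow> 'a \<Rightarrow> 'a" where
  "swp a b x = (if x = a then b else if x = b then a else x)"

lemma swp_swp[simp]: "swp a b (swp a b x) = x"
  by (auto simp: swp_def)

lemma bij_swp: assumes "a \<in> X" "b \<in> X" shows "bij_betw (swp a b) X X"
proof -
  have "inj_on (swp a b) X"
  proof (rule inj_onI)
    fix x y assume "swp a b x = swp a b y"
    hence "swp a b (swp a b x) = swp a b (swp a b y)" by simp
    thus "x = y" by simp
  qed
  moreover have "swp a b ` X = X"
  proof
    show "swp a b ` X \<subseteq> X" using assms by (auto simp: swp_def)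
    show "X \<subseteq> swp a b ` X"
    proof
      fix x assume "x \<in> X"
      hence "swp a b x \<in> X" using assms by (auto simp: swp_def)
      thus "x \<in> swp a b ` X" using image_eqI[of x "swp a b" "swp a b x"] by simp
    qed
  qed
  ultimately show ?thesis by (simp add: bij_betw_def)
qed

lemma swp_mem: assumes "a \<in> S \<longleftrightarrow> b \<in> S" "x \<in> S" shows "swp a b x \<in> S"
proof (cases "x = a")
  case True thus ?thesis using assms by (simp add: swp_def)
next
  case False
  show ?thesis
  proof (cases "x = b")
    case True thus ?thesis using assms False by (simp add: swp_def)
  next
    case False2: False
    thus ?thesis using assms False by (simp add: swp_def)
  qed
qed
lemma swp_image: assumes "a \<in> S \<longleftrightarrow> b \<in> S" shows "swp a b ` S = S"
proof
  show "swp a b ` S \<subseteq> S" using swp_mem[OF assms] by blast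
  show "S \<subseteq> swp a b ` S"
  proof
    fix x assume "x \<in> S"
    hence "swp a b x \<in> S" by (rule swp_mem[OF assms])
    thus "x \<in> swp a b ` S" using image_eqI[of x "swp a b" "swp a b x"] by simp
  qed
qed

lemma swp_eq_a: "swp a b z = a \<Longrightarrow> z = b"
  by (auto simp: swp_def split: if_splits)

lemma swp_eq_other: "swp a b z = y \<Longrightarrow> y \<noteq> a \<Longrightarrow> y \<noteq> b \<Longrightarrow> z = y"
  by (auto simp: swp_def split: if_splits)

lemma pick_other:
  assumes "finite Y" "card Y \<ge> 3" shows "\<exists>z\<in>Y. z \<noteq> a \<and> z \<noteq> b"
proof (rule ccontr)
  assume "\<not> ?thesis"
  hence "Y \<subseteq> {a, b}" by auto
  hence "card Y \<le> card {a, b}" by (simp add: card_mono)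
  also have "\<dots> \<le> 2" by (simp add: card_insert_le_m1)
  finally show False using assms by simp
qed

lemma ex_perm:
  assumes fin: "finite X" and AX: "A \<subseteq> X" and BX: "B \<subseteq> X" and cAB: "card A = card B"
    and l0: "l0 \<in> X" "l0 \<notin> A" and r0: "r0 \<in> X" "r0 \<notin> A" "l0 \<noteq> r0"
    and l: "l \<in> X" "l \<notin> B" and r: "r \<in> X" "r \<notin> B" "l \<noteq> r"
  shows "\<exists>\<sigma>. bij_betw \<sigma> X X \<and> \<sigma> ` A = B \<and> \<sigma> l0 = l \<and> \<sigma> r0 = r"
proof -
  have finA: "finite A" using fin AX finite_subset by blast
  have finB: "finite B" using fin BX finite_subset by blast
  obtain f where f: "bij_betw f A B" using finite_same_card_bij[OF finA finB cAB] by blast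
  define t where "t = (\<lambda>x. if x = l0 then l else r)"
  have t: "bij_betw t {l0, r0} {l, r}"
    unfolding bij_betw_def inj_on_def t_def using r0(3) r(3) by auto
  define A2 where "A2 = A \<union> {l0, r0}"
  define B2 where "B2 = B \<union> {l, r}"
  have A2X: "A2 \<subseteq> X" unfolding A2_def using AX l0 r0 by blast
  have B2X: "B2 \<subseteq> X" unfolding B2_def using BX l r by blast
  have cA2: "card A2 = card A + 2" unfolding A2_def using finA l0 r0 by simp
  have cB2: "card B2 = card B + 2" unfolding B2_def using finB l r by simp
  have finA2: "finite A2" using fin A2X finite_subset by blast
  have finB2: "finite B2" using fin B2X finite_subset by blast
  have c1: "card (X - A2) = card X - card A2" using card_Diff_subset[OF finA2 A2X] .
  have c2: "card (X - B2) = card X - card B2" using card_Diff_subset[OF finB2 B2X] .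
  have ceq: "card (X - A2) = card (X - B2)" using c1 c2 cA2 cB2 cAB by simp
  obtain g where g: "bij_betw g (X - A2) (X - B2)"
    using finite_same_card_bij[OF finite_Diff[OF fin] finite_Diff[OF fin] ceq] by blast
  have d1: "A \<inter> {l0, r0} = {}" using l0 r0 by blast
  have d2: "B \<inter> {l, r} = {}" using l r by blast
  have ft: "bij_betw (\<lambda>x. if x \<in> A then f x else t x) A2 B2"
    unfolding A2_def B2_def by (rule bij_betw_disjoint_Un[OF f t d1 d2])
  have all: "bij_betw (\<lambda>x. if x \<in> A2 then (if x \<in> A then f x else t x) else g x)
      (A2 \<union> (X - A2)) (B2 \<union> (X - B2))"
    by (rule bij_betw_disjoint_Un[OF ft g]) blast+
  define \<sigma> where "\<sigma> = (\<lambda>x. if x \<in> A2 then (if x \<in> A then f x else t x) else g x)"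
  have e1: "A2 \<union> (X - A2) = X" using A2X by blast
  have e2: "B2 \<union> (X - B2) = X" using B2X by blast
  have "bij_betw \<sigma> X X" using all unfolding e1 e2 \<sigma>_def .
  moreover have "\<sigma> ` A = f ` A"
    by (rule image_cong) (auto simp: \<sigma>_def A2_def)
  hence "\<sigma> ` A = B" using f by (simp add: bij_betw_def)
  moreover have "\<sigma> l0 = l" "\<sigma> r0 = r" using l0 r0 unfolding \<sigma>_def t_def A2_def by auto
  ultimately show ?thesis by blast
qed

locale chs =
  fixes X :: "'a set" and k r :: nat and C :: "('a set \<Rightarrow> 'a) set"
  assumes finX: "finite X" and r3: "r \<ge> 3" and kr: "k \<ge> r" and k5: "k \<ge> 5"
    and nk: "card X > k"
    and Cne: "C \<noteq> {}" and Cch: "\<forall>c\<in>C. choice_fun X k c"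
    and sym: "symmetric_family X k C"
    and patch: "\<forall>as. length as = r \<and> set as \<subseteq> X \<and> distinct as \<longrightarrow>
      (\<exists>f. closed_under X k C r f \<and> f as = as ! 1 \<and>
        (\<forall>bs. length bs = r \<and> set bs \<subseteq> X \<and> \<not> distinct bs \<longrightarrow> f bs = bs ! 0))"
begin

abbreviation "K \<equiv> ksubsets X k"

lemma K_sub: "Y \<in> K \<Longrightarrow> Y \<subseteq> X" by (simp add: ksubsets_def)
lemma K_card: "Y \<in> K \<Longrightarrow> card Y = k" by (simp add: ksubsets_def)
lemma K_fin: "Y \<in> K \<Longrightarrow> finite Y" using finX K_sub finite_subset by blast

lemma ch: "h \<in> C \<Longrightarrow> Y \<in> K \<Longrightarrow> h Y \<in> Y"
  using Cch by (auto simp: choice_fun_def)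

lemma ch_out: "h \<in> C \<Longrightarrow> Y \<notin> K \<Longrightarrow> h Y = undefined"
  using Cch by (auto simp: choice_fun_def)

lemma perm:
  assumes bij: "bij_betw \<sigma> X X" and h: "h \<in> C"
  shows "\<exists>h'\<in>C. \<forall>Y\<in>K. h' Y \<in> X \<and> \<sigma> (h' Y) = h (\<sigma> ` Y)"
proof (intro bexI ballI)
  show "perm_act X k \<sigma> h \<in> C" using sym bij h by (auto simp: symmetric_family_def)
  fix Y assume Y: "Y \<in> K"
  have inj: "inj_on \<sigma> X" and im: "\<sigma> ` X = X" using bij by (auto simp: bij_betw_def)
  have YX: "Y \<subseteq> X" using Y K_sub by blast
  have s1: "\<sigma> ` Y \<subseteq> X" using YX im by blast
  have s2: "card (\<sigma> ` Y) = k"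
    using card_image[OF inj_on_subset[OF inj YX]] K_card[OF Y] by simp
  have sY: "\<sigma> ` Y \<in> K" using s1 s2 by (simp add: ksubsets_def)
  have v: "h (\<sigma> ` Y) \<in> \<sigma> ` X" using ch[OF h sY] YX by auto
  have eq: "perm_act X k \<sigma> h Y = the_inv_into X \<sigma> (h (\<sigma> ` Y))"
    using Y by (simp add: perm_act_def)
  show "perm_act X k \<sigma> h Y \<in> X \<and> \<sigma> (perm_act X k \<sigma> h Y) = h (\<sigma> ` Y)"
    unfolding eq using the_inv_into_into[OF inj v] f_the_inv_into_f[OF inj v] by simp
qed

lemma real1: assumes Y: "Y \<in> K" and z: "z \<in> Y" shows "\<exists>h\<in>C. h Y = z"
proof -
  obtain c where c: "c \<in> C" using Cne by auto
  define u where "u = c Y"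
  have u: "u \<in> Y" unfolding u_def by (rule ch[OF c Y])
  have YX: "Y \<subseteq> X" using Y by (rule K_sub)
  have bij: "bij_betw (swp u z) X X" by (rule bij_swp) (use u z YX in blast)+
  obtain h where h: "h \<in> C" and hY: "\<forall>Y\<in>K. h Y \<in> X \<and> swp u z (h Y) = c (swp u z ` Y)"
    using perm[OF bij c] by blast
  have im: "swp u z ` Y = Y" by (rule swp_image) (simp add: u z)
  have "swp u z (h Y) = c (swp u z ` Y)" using hY Y by blast
  hence "swp u z (h Y) = c Y" by (simp only: im)
  hence "swp u z (h Y) = u" by (simp only: u_def)
  hence "h Y = z" by (rule swp_eq_a)
  thus ?thesis using h by blast
qed


lemma pick_list:
  assumes "finite S" "n \<le> card S"
  shows "\<exists>ws. distinct ws \<and> length ws = n \<and> set ws \<subseteq> S"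
proof -
  obtain T where T: "T \<subseteq> S" "card T = n" "finite T" using obtain_subset_with_card_n[OF assms(2)] by blast
  obtain ws where ws: "set ws = T" "distinct ws" using finite_distinct_list[OF T(3)] by blast
  have "length ws = n" using distinct_card[OF ws(2)] ws(1) T(2) by simp
  thus ?thesis using ws T(1) by blast
qed

lemma PL3:
  assumes Y0: "Y0 \<in> K" and p: "p \<in> C" and q: "q \<in> C" and g: "g \<in> C"
    and d: "distinct [p Y0, q Y0, g Y0]"
  shows "\<exists>h\<in>C. h Y0 = q Y0 \<and> (\<forall>Y\<in>K. \<not> distinct [p Y, q Y, g Y] \<longrightarrow> h Y = p Y)"
proof -
  let ?S = "Y0 - {p Y0, q Y0, g Y0}"
  have sub: "{p Y0, q Y0, g Y0} \<subseteq> Y0" using ch p q g Y0 by auto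
  have c3: "card {p Y0, q Y0, g Y0} = 3" using d by simp
  have cS: "card ?S = k - 3"
    using K_fin[OF Y0] sub c3 K_card[OF Y0] by (simp add: card_Diff_subset)
  obtain ws where ws: "distinct ws" "length ws = r - 3" "set ws \<subseteq> ?S"
  proof -
    have finS: "finite ?S" using K_fin[OF Y0] by simp
    have "r - 3 \<le> card ?S" using cS kr by simp
    thus ?thesis using pick_list[OF finS] that by blast
  qed
  define e where "e = (\<lambda>w. SOME h. h \<in> C \<and> h Y0 = w)"
  have e: "e w \<in> C \<and> e w Y0 = w" if "w \<in> set ws" for w
  proof -
    have "\<exists>h. h \<in> C \<and> h Y0 = w" using real1[OF Y0] that ws(3) by blast
    thus ?thesis unfolding e_def by (rule someI_ex)
  qed
  define cs where "cs = (\<lambda>i::nat. if i = 0 then p else if i = 1 then q else if i = 2 then g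
     else e (ws ! (i - 3)))"
  have csC: "\<forall>i<r. cs i \<in> C"
  proof (intro allI impI)
    fix i assume i: "i < r"
    show "cs i \<in> C"
    proof (cases "i < 3")
      case True thus ?thesis using p q g by (auto simp: cs_def)
    next
      case False
      hence "ws ! (i - 3) \<in> set ws" using i ws(2) by simp
      thus ?thesis using e False by (auto simp: cs_def)
    qed
  qed
  have upt: "[0..<r] = [0, 1, 2] @ [3..<r]"
  proof -
    have "[0..<r] = [0..<3] @ [3..<r]" using r3 upt_add_eq_append[of 0 3 "r - 3"] by simp
    also have "[0..<3] = [0, 1, (2::nat)]" by (simp add: upt_rec)
    finally show ?thesis .
  qed
  have mapY: "map (\<lambda>i. cs i Y) [0..<r] = [p Y, q Y, g Y] @ map (\<lambda>i. cs i Y) [3..<r]" for Y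
    by (subst upt) (simp add: cs_def)
  have tail0: "map (\<lambda>i. cs i Y0) [3..<r] = ws"
  proof (rule nth_equalityI)
    show "length (map (\<lambda>i. cs i Y0) [3..<r]) = length ws" using ws(2) by simp
    fix j assume "j < length (map (\<lambda>i. cs i Y0) [3..<r])"
    hence j: "j < r - 3" by simp
    hence "ws ! j \<in> set ws" using ws(2) by simp
    thus "map (\<lambda>i. cs i Y0) [3..<r] ! j = ws ! j" using j e by (simp add: cs_def)
  qed
  define as where "as = map (\<lambda>i. cs i Y0) [0..<r]"
  have as: "as = [p Y0, q Y0, g Y0] @ ws" unfolding as_def mapY tail0 by simp
  have asd: "distinct as" using as d ws by auto
  have asX: "set as \<subseteq> X" using as sub ws(3) K_sub[OF Y0] by auto
  have asl: "length as = r" by (simp add: as_def)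
  obtain f where f: "closed_under X k C r f" "f as = as ! 1"
    "\<forall>bs. length bs = r \<and> set bs \<subseteq> X \<and> \<not> distinct bs \<longrightarrow> f bs = bs ! 0"
    using patch asd asX asl by blast
  define h where "h = (\<lambda>Y. if Y \<in> K then f (map (\<lambda>i. cs i Y) [0..<r]) else undefined)"
  have cl: "\<And>cs. (\<forall>i<r. cs i \<in> C) \<Longrightarrow>
      (\<lambda>Y. if Y \<in> K then f (map (\<lambda>i. cs i Y) [0..<r]) else undefined) \<in> C"
    using f(1) unfolding closed_under_def by blast
  have hC: "h \<in> C" unfolding h_def by (rule cl[OF csC])
  have h0: "h Y0 = q Y0" using Y0 f(2) as unfolding h_def as_def by simp
  have "h Y = p Y" if Y: "Y \<in> K" and nd: "\<not> distinct [p Y, q Y, g Y]" for Y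
  proof -
    let ?bs = "map (\<lambda>i. cs i Y) [0..<r]"
    have "set ?bs \<subseteq> X"
    proof
      fix x assume "x \<in> set ?bs"
      then obtain i where i: "i < r" "x = cs i Y" by auto
      hence "x \<in> Y" using ch csC Y by blast
      thus "x \<in> X" using K_sub[OF Y] by blast
    qed
    moreover have "\<not> distinct ?bs" using nd by (subst mapY) (simp only: distinct_append, blast)
    ultimately have "f ?bs = ?bs ! 0" using f(3) by simp
    also have "\<dots> = p Y" by (subst mapY) (simp)
    finally show ?thesis using Y by (simp add: h_def)
  qed
  thus ?thesis using hC h0 by blast
qed

definition Real :: "'a set \<Rightarrow> 'a set \<Rightarrow> 'a \<Rightarrow> 'a \<Rightarrow> bool" where
  "Real Y0 Y1 x y \<longleftrightarrow> (\<exists>h\<in>C. h Y0 = x \<and> h Y1 = y)"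

lemma gen:
  assumes Y0: "Y0 \<in> K" and Y1: "Y1 \<in> K"
    and a: "Real Y0 Y1 x y" and b: "Real Y0 Y1 w y'" and c: "Real Y0 Y1 x'' y''"
    and d: "distinct [x, w, x'']" and nd: "\<not> distinct [y, y', y'']"
  shows "Real Y0 Y1 w y"
proof -
  obtain p where p: "p \<in> C" "p Y0 = x" "p Y1 = y" using a by (auto simp: Real_def)
  obtain q where q: "q \<in> C" "q Y0 = w" "q Y1 = y'" using b by (auto simp: Real_def)
  obtain g where g: "g \<in> C" "g Y0 = x''" "g Y1 = y''" using c by (auto simp: Real_def)
  obtain h where h: "h \<in> C" "h Y0 = q Y0" "\<forall>Y\<in>K. \<not> distinct [p Y, q Y, g Y] \<longrightarrow> h Y = p Y"
    using PL3[OF Y0 p(1) q(1) g(1)] p q g d by auto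
  have "h Y1 = y" using h(3) Y1 p q g nd by auto
  thus ?thesis using h q by (auto simp: Real_def)
qed

lemma real_in: "Real Y0 Y1 x y \<Longrightarrow> Y0 \<in> K \<Longrightarrow> Y1 \<in> K \<Longrightarrow> x \<in> Y0 \<and> y \<in> Y1"
  using ch by (auto simp: Real_def)

lemma key:
  assumes Y0: "Y0 \<in> K" and Y1: "Y1 \<in> K"
    and a: "Real Y0 Y1 x1 y" and b: "Real Y0 Y1 x2 y" and ne: "x1 \<noteq> x2"
  shows "\<forall>x\<in>Y0. \<forall>y'\<in>Y1. Real Y0 Y1 x y'"
proof -
  have k3: "card Y0 \<ge> 3" using K_card[OF Y0] k5 by simp
  have col: "Real Y0 Y1 w y" if w: "w \<in> Y0" for w
  proof (cases "w = x1 \<or> w = x2")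
    case True thus ?thesis using a b by auto
  next
    case False
    obtain h where h: "h \<in> C" "h Y0 = w" using real1[OF Y0 w] by blast
    have "Real Y0 Y1 w (h Y1)" using h by (auto simp: Real_def)
    thus ?thesis using gen[OF Y0 Y1 a _ b, of w "h Y1"] False ne by auto
  qed
  show ?thesis
  proof (intro ballI)
    fix x y' assume x: "x \<in> Y0" and y': "y' \<in> Y1"
    obtain h where h: "h \<in> C" "h Y1 = y'" using real1[OF Y1 y'] by blast
    have r0: "Real Y0 Y1 (h Y0) y'" using h by (auto simp: Real_def)
    show "Real Y0 Y1 x y'"
    proof (cases "x = h Y0")
      case True thus ?thesis using r0 by simp
    next
      case False
      obtain x'' where x'': "x'' \<in> Y0" "x'' \<noteq> h Y0" "x'' \<noteq> x"
        using pick_other[OF K_fin[OF Y0] k3] by blast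
      show ?thesis using gen[OF Y0 Y1 r0 col[OF x] col[OF x''(1)]] False x'' by auto
    qed
  qed
qed

definition good :: "'a set \<Rightarrow> 'a \<Rightarrow> 'a \<Rightarrow> bool" where
  "good B lb rb \<longleftrightarrow> (\<forall>h\<in>C. (h (insert lb B) \<in> B \<longrightarrow> h (insert rb B) = h (insert lb B)) \<and>
      (h (insert lb B) = lb \<longrightarrow> h (insert rb B) = rb))"

lemma insK: "B \<subseteq> X \<Longrightarrow> card B + 1 = k \<Longrightarrow> lb \<in> X \<Longrightarrow> lb \<notin> B \<Longrightarrow> insert lb B \<in> K"
proof -
  assume a: "B \<subseteq> X" "card B + 1 = k" "lb \<in> X" "lb \<notin> B"
  have "finite B" using finX a(1) finite_subset by blast
  thus ?thesis using a by (simp add: ksubsets_def)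
qed

lemma transport:
  assumes g: "good A l0 r0" and AX: "A \<subseteq> X" and BX: "B \<subseteq> X" and cA: "card A + 1 = k"
    and cB: "card B + 1 = k"
    and l0: "l0 \<in> X" "l0 \<notin> A" and r0: "r0 \<in> X" "r0 \<notin> A" "l0 \<noteq> r0"
    and lb: "lb \<in> X" "lb \<notin> B" and rb: "rb \<in> X" "rb \<notin> B" "lb \<noteq> rb"
  shows "good B lb rb"
proof -
  obtain \<sigma> where s: "bij_betw \<sigma> X X" "\<sigma> ` A = B" "\<sigma> l0 = lb" "\<sigma> r0 = rb"
    using ex_perm[OF finX AX BX _ l0 r0 lb rb] cA cB by auto
  have inj: "inj_on \<sigma> X" using s(1) by (simp add: bij_betw_def)
  show ?thesis unfolding good_def
  proof (intro ballI conjI impI)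
    fix h assume h: "h \<in> C"
    obtain h' where h': "h' \<in> C" "\<forall>Y\<in>K. h' Y \<in> X \<and> \<sigma> (h' Y) = h (\<sigma> ` Y)"
      using perm[OF s(1) h] by blast
    have K1: "insert l0 A \<in> K" using insK AX cA l0 by blast
    have K2: "insert r0 A \<in> K" using insK AX cA r0 by blast
    have i1: "\<sigma> ` insert l0 A = insert lb B" using s by simp
    have i2: "\<sigma> ` insert r0 A = insert rb B" using s by simp
    define a where "a = h' (insert l0 A)"
    define b where "b = h' (insert r0 A)"
    have a: "a \<in> X" "\<sigma> a = h (insert lb B)" using h' K1 i1 a_def by auto
    have b: "b \<in> X" "\<sigma> b = h (insert rb B)" using h' K2 i2 b_def by auto
    have gh: "(a \<in> A \<longrightarrow> b = a) \<and> (a = l0 \<longrightarrow> b = r0)"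
      using g h'(1) unfolding good_def a_def b_def by blast
    {
      assume "h (insert lb B) \<in> B"
      hence "\<sigma> a \<in> \<sigma> ` A" using a s(2) by simp
      hence "a \<in> A" using inj a(1) AX by (auto dest: inj_onD)
      thus "h (insert rb B) = h (insert lb B)" using gh a b by simp
    next
      assume "h (insert lb B) = lb"
      hence "\<sigma> a = \<sigma> l0" using a s(3) by simp
      hence "a = l0" using inj a(1) l0 by (auto dest: inj_onD)
      thus "h (insert rb B) = rb" using gh b s(4) by simp
    }
  qed
qed

lemma stuck:
  assumes g: "good A l0 r0" and AX: "A \<subseteq> X" and cA: "card A + 1 = k"
    and l0: "l0 \<in> X" "l0 \<notin> A" and r0: "r0 \<in> X" "r0 \<notin> A" "l0 \<noteq> r0"
  shows False
proof -
  have gd: "good B lb rb" if "B \<subseteq> X" "card B + 1 = k" "lb \<in> X" "lb \<notin> B" "rb \<in> X" "rb \<notin> B" "lb \<noteq> rb"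
    for B lb rb using transport[OF g AX _ cA _ l0 r0] that by blast
  obtain c where c: "c \<in> C" using Cne by auto
  define Y where "Y = insert l0 A"
  have Y: "Y \<in> K" using insK AX cA l0 Y_def by blast
  have YX: "Y \<subseteq> X" using K_sub[OF Y] .
  have finY: "finite Y" using K_fin[OF Y] .
  have cY: "card Y = k" using K_card[OF Y] .
  define y where "y = c Y"
  have y: "y \<in> Y" using ch c Y y_def by blast
  have "\<not> X \<subseteq> Y"
  proof
    assume "X \<subseteq> Y"
    hence "card X \<le> card Y" by (rule card_mono[OF finY])
    thus False using nk cY by simp
  qed
  then obtain x where x: "x \<in> X" "x \<notin> Y" by blast
  have claim: "c (insert x (Y - {y})) = y'" if y': "y' \<in> Y" "y' \<noteq> y" for y'
  proof -
    let ?B = "Y - {y'}"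
    have cB: "card ?B + 1 = k" using cY y' finY k5 by (simp add: card_Diff_singleton)
    have g1: "good ?B y' x" using gd[of ?B y' x] YX cB y' x by auto
    have e1: "insert y' ?B = Y" using y' by auto
    have "c (insert x ?B) = y" using g1 c e1 y y' unfolding good_def y_def by auto
    let ?B2 = "insert x (Y - {y, y'})"
    have cB2: "card ?B2 + 1 = k"
    proof -
      have "card (Y - {y, y'}) = k - 2" using cY y y' finY
        by (simp add: card_Diff_subset)
      thus ?thesis using x finY k5 by simp
    qed
    have g2: "good ?B2 y y'" using gd[of ?B2 y y'] YX cB2 y y' x by auto
    have e2: "insert y ?B2 = insert x ?B" using y y' by auto
    have e3: "insert y' ?B2 = insert x (Y - {y})" using y y' by auto
    have "c (insert y ?B2) = y" using \<open>c (insert x ?B) = y\<close> e2 by simp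
    hence "c (insert y' ?B2) = y'" using g2 c unfolding good_def by blast
    thus ?thesis using e3 by simp
  qed
  obtain y1 where y1: "y1 \<in> Y" "y1 \<noteq> y" "y1 \<noteq> y" using pick_other[OF finY, of y y] cY k5 by auto
  obtain y2 where y2: "y2 \<in> Y" "y2 \<noteq> y" "y2 \<noteq> y1" using pick_other[OF finY, of y y1] cY k5 by auto
  show False using claim[OF y1(1,2)] claim[OF y2(1,2)] y2 by simp
qed


lemma finK: "finite K"
  by (rule finite_subset[of _ "Pow X"]) (auto simp: ksubsets_def finX)

lemma swp_real:
  assumes h: "h \<in> C" and a: "a \<in> X" and b: "b \<in> X"
    and Y0: "Y0 \<in> K" and Y1: "Y1 \<in> K"
    and s0: "a \<in> Y0 \<longleftrightarrow> b \<in> Y0" and s1: "a \<in> Y1 \<longleftrightarrow> b \<in> Y1"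
    and h0: "h Y0 = a" and h1a: "h Y1 \<noteq> a" and h1b: "h Y1 \<noteq> b"
  shows "Real Y0 Y1 b (h Y1)"
proof -
  have bij: "bij_betw (swp a b) X X" by (rule bij_swp[OF a b])
  obtain h' where h': "h' \<in> C" and hY: "\<forall>Y\<in>K. h' Y \<in> X \<and> swp a b (h' Y) = h (swp a b ` Y)"
    using perm[OF bij h] by blast
  have i0: "swp a b ` Y0 = Y0" by (rule swp_image[OF s0])
  have i1: "swp a b ` Y1 = Y1" by (rule swp_image[OF s1])
  have "swp a b (h' Y0) = h (swp a b ` Y0)" using hY Y0 by blast
  hence "swp a b (h' Y0) = a" by (simp only: i0 h0)
  hence e0: "h' Y0 = b" by (rule swp_eq_a)
  have "swp a b (h' Y1) = h (swp a b ` Y1)" using hY Y1 by blast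
  hence "swp a b (h' Y1) = h Y1" by (simp only: i1)
  hence e1: "h' Y1 = h Y1" using h1a h1b by (rule swp_eq_other)
  show ?thesis using h' e0 e1 by (auto simp: Real_def)
qed

lemma full:
  assumes Y0: "Y0 \<in> K" and Y1: "Y1 \<in> K" and ne: "Y0 \<noteq> Y1" and x: "x \<in> Y0" and y: "y \<in> Y1"
  shows "Real Y0 Y1 x y"
proof -
  have fin0: "finite Y0" using K_fin[OF Y0] .
  have fin1: "finite Y1" using K_fin[OF Y1] .
  have c0: "card Y0 = k" using K_card[OF Y0] .
  have c1: "card Y1 = k" using K_card[OF Y1] .
  have X0: "Y0 \<subseteq> X" using K_sub[OF Y0] .
  have X1: "Y1 \<subseteq> X" using K_sub[OF Y1] .
  have "\<exists>x1 x2 yy. Real Y0 Y1 x1 yy \<and> Real Y0 Y1 x2 yy \<and> x1 \<noteq> x2"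
  proof (rule ccontr)
    assume NI0: "\<not> ?thesis"
    have NI: "x1 = x2" if "Real Y0 Y1 x1 yy" "Real Y0 Y1 x2 yy" for x1 x2 yy
      using NI0 that by blast
    have Lne: "Y0 - Y1 \<noteq> {}"
    proof
      assume "Y0 - Y1 = {}"
      hence "Y0 \<subseteq> Y1" by blast
      hence "Y0 = Y1" using card_subset_eq[OF fin1] c0 c1 by simp
      thus False using ne by simp
    qed
    show False
    proof (cases "\<exists>a b. a \<in> Y0 - Y1 \<and> b \<in> Y0 - Y1 \<and> a \<noteq> b")
      case True
      then obtain a b where ab: "a \<in> Y0 - Y1" "b \<in> Y0 - Y1" "a \<noteq> b" by blast
      obtain h where h: "h \<in> C" "h Y0 = a" using real1[OF Y0] ab by blast
      have hy: "h Y1 \<in> Y1" using ch h(1) Y1 by blast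
      have r1: "Real Y0 Y1 a (h Y1)" using h by (auto simp: Real_def)
      have r2: "Real Y0 Y1 b (h Y1)"
        by (rule swp_real[OF h(1) _ _ Y0 Y1]) (use ab X0 hy h in auto)
      show False using NI[OF r1 r2] ab by simp
    next
      case False
      obtain l0 where l0: "l0 \<in> Y0 - Y1" using Lne by blast
      have L: "Y0 - Y1 = {l0}" using False l0 by blast
      define A where "A = Y0 \<inter> Y1"
      have Y0A: "Y0 = insert l0 A" using L l0 unfolding A_def by blast
      have l0A: "l0 \<notin> A" using l0 unfolding A_def by blast
      have AX: "A \<subseteq> X" using X0 unfolding A_def by blast
      have finA: "finite A" using fin0 unfolding A_def by simp
      have cA: "card A + 1 = k" using c0 Y0A finA l0A by simp
      have Rne: "Y1 - Y0 \<noteq> {}"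
      proof
        assume "Y1 - Y0 = {}"
        hence "Y1 \<subseteq> Y0" by blast
        hence "Y1 = Y0" using card_subset_eq[OF fin0] c0 c1 by simp
        thus False using ne by simp
      qed
      obtain r0 where r0: "r0 \<in> Y1 - Y0" using Rne by blast
      have "card (Y1 - Y0) = 1"
      proof -
        have "Y1 = A \<union> (Y1 - Y0)" unfolding A_def by blast
        moreover have "A \<inter> (Y1 - Y0) = {}" unfolding A_def by blast
        ultimately have "card Y1 = card A + card (Y1 - Y0)"
          using finA fin1 by (metis card_Un_disjoint finite_Diff)
        thus ?thesis using c1 cA by simp
      qed
      then obtain rr where "Y1 - Y0 = {rr}" by (rule card_1_singletonE)
      hence R: "Y1 - Y0 = {r0}" using r0 by auto
      have Y1A: "Y1 = insert r0 A" using R r0 unfolding A_def by blast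
      have r0A: "r0 \<notin> A" using r0 unfolding A_def by blast
      have l0X: "l0 \<in> X" and r0X: "r0 \<in> X" using l0 r0 X0 X1 by auto
      have lr: "l0 \<noteq> r0" using l0 r0 by blast
      have cA3: "card A \<ge> 3" using cA k5 by simp
      have cl1: "h Y1 = h Y0" if h: "h \<in> C" "h Y0 \<in> A" for h
      proof (rule ccontr)
        assume ne1: "h Y1 \<noteq> h Y0"
        obtain x' where x': "x' \<in> A" "x' \<noteq> h Y0" "x' \<noteq> h Y1"
          using pick_other[OF finA cA3] by blast
        have r1: "Real Y0 Y1 (h Y0) (h Y1)" using h by (auto simp: Real_def)
        have r2: "Real Y0 Y1 x' (h Y1)"
          by (rule swp_real[OF h(1) _ _ Y0 Y1]) (use h x' AX ne1 Y0A Y1A in auto)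
        show False using NI[OF r1 r2] x' by simp
      qed
      have cl2: "h Y1 = r0" if h: "h \<in> C" "h Y0 = l0" for h
      proof (rule ccontr)
        assume ne2: "h Y1 \<noteq> r0"
        have "h Y1 \<in> Y1" using ch h(1) Y1 by blast
        hence yA: "h Y1 \<in> A" using ne2 Y1A by blast
        hence "h Y1 \<in> Y0" using Y0A by blast
        then obtain h2 where h2: "h2 \<in> C" "h2 Y0 = h Y1" using real1[OF Y0] by blast
        have "h2 Y1 = h2 Y0" using cl1[OF h2(1)] h2(2) yA by simp
        hence r2: "Real Y0 Y1 (h Y1) (h Y1)" using h2 by (auto simp: Real_def)
        have r1: "Real Y0 Y1 l0 (h Y1)" using h by (auto simp: Real_def)
        show False using NI[OF r1 r2] yA l0A by simp
      qed
      have "good A l0 r0" unfolding good_def Y0A[symmetric] Y1A[symmetric]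
        using cl1 cl2 by blast
      thus False using stuck[OF _ AX cA l0X l0A r0X r0A lr] by blast
    qed
  qed
  then obtain x1 x2 yy where "Real Y0 Y1 x1 yy" "Real Y0 Y1 x2 yy" "x1 \<noteq> x2" by blast
  thus ?thesis using key[OF Y0 Y1] x y by blast
qed

lemma SM:
  assumes p: "p \<in> C" and Y0: "Y0 \<in> K" and v: "v \<in> Y0"
  shows "(\<lambda>Y. if Y = Y0 then v else p Y) \<in> C"
proof (cases "v = p Y0")
  case True
  hence "(\<lambda>Y. if Y = Y0 then v else p Y) = p" by auto
  thus ?thesis using p by simp
next
  case False
  have step: "\<exists>h\<in>C. h Y0 = v \<and> (\<forall>Y\<in>T. h Y = p Y)" if "finite T" "T \<subseteq> K - {Y0}" for T
    using that
  proof (induction T rule: finite_induct)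
    case empty thus ?case using real1[OF Y0 v] by auto
  next
    case (insert Y1 T)
    then obtain h where h: "h \<in> C" "h Y0 = v" "\<forall>Y\<in>T. h Y = p Y" by auto
    have Y1: "Y1 \<in> K" "Y1 \<noteq> Y0" using insert.prems by auto
    obtain w where w: "w \<in> Y0" "w \<noteq> p Y0" "w \<noteq> v"
      using pick_other[OF K_fin[OF Y0]] K_card[OF Y0] k5 by fastforce
    have "Real Y0 Y1 w (p Y1)" using full[OF Y0 Y1(1)] Y1(2) w ch[OF p Y1(1)] by auto
    then obtain g where g: "g \<in> C" "g Y0 = w" "g Y1 = p Y1" by (auto simp: Real_def)
    have dd: "distinct [p Y0, h Y0, g Y0]" using h(2) g(2) w False by auto
    obtain h' where h': "h' \<in> C" "h' Y0 = h Y0"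
        "\<forall>Y\<in>K. \<not> distinct [p Y, h Y, g Y] \<longrightarrow> h' Y = p Y"
      using PL3[OF Y0 p h(1) g(1) dd] by blast
    have "\<forall>Y\<in>insert Y1 T. h' Y = p Y"
    proof
      fix Y assume "Y \<in> insert Y1 T"
      moreover have "Y \<in> K" using insert.prems \<open>Y \<in> insert Y1 T\<close> by auto
      ultimately show "h' Y = p Y" using h'(3) g(3) h(3) by auto
    qed
    thus ?case using h' h(2) by auto
  qed
  obtain h where h: "h \<in> C" "h Y0 = v" "\<forall>Y\<in>K - {Y0}. h Y = p Y"
    using step[of "K - {Y0}"] finK by blast
  have "h = (\<lambda>Y. if Y = Y0 then v else p Y)"
  proof
    fix Y show "h Y = (if Y = Y0 then v else p Y)"
      using h ch_out[OF h(1)] ch_out[OF p] Y0 by (cases "Y \<in> K") auto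
  qed
  thus ?thesis using h by simp
qed

lemma fullC: assumes d: "choice_fun X k d" shows "d \<in> C"
proof -
  have din: "d Y \<in> Y" if "Y \<in> K" for Y using d that unfolding choice_fun_def by blast
  have dout: "d Y = undefined" if "Y \<notin> K" for Y using d that unfolding choice_fun_def by blast
  have step: "\<exists>h\<in>C. \<forall>Y\<in>T. h Y = d Y" if "finite T" "T \<subseteq> K" for T
    using that
  proof (induction T rule: finite_induct)
    case empty
    obtain c where "c \<in> C" using Cne by blast
    thus ?case by blast
  next
    case (insert Y1 T)
    have TK: "T \<subseteq> K" using insert.prems by blast
    obtain h where h: "h \<in> C" "\<forall>Y\<in>T. h Y = d Y" using insert.IH[OF TK] by blast
    have Y1: "Y1 \<in> K" using insert.prems by blast
    have dv: "d Y1 \<in> Y1" by (rule din[OF Y1])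
    define h' where "h' = (\<lambda>Y. if Y = Y1 then d Y1 else h Y)"
    have "h' \<in> C" unfolding h'_def by (rule SM[OF h(1) Y1 dv])
    moreover have "\<forall>Y\<in>insert Y1 T. h' Y = d Y" using h(2) by (simp add: h'_def)
    ultimately show ?case by blast
  qed
  obtain h where h: "h \<in> C" "\<forall>Y\<in>K. h Y = d Y" using step[OF finK] by blast
  have "h = d"
  proof
    fix Y show "h Y = d Y"
    proof (cases "Y \<in> K")
      case True thus ?thesis using h(2) by blast
    next
      case False thus ?thesis using ch_out[OF h(1) False] dout[OF False] by simp
    qed
  qed
  thus ?thesis using h(1) by simp
qed
end


theorem lemma12p1:
  fixes X :: "'a set" and r k :: nat
    and F :: "(nat \<times> ('a list \<Rightarrow> 'a)) set"
    and C :: "('a set \<Rightarrow> 'a) set"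
  assumes "finite X"
    and "r \<ge> 3" and "k \<ge> r" and "k \<ge> 5"
    and "card X - k \<ge> max 7 r" and "card X \<ge> k"
    and "is_clone X F"
    and "(\<exists>f. (r, f) \<in> F \<and> agree_on X r f f_r12) \<or>
         (\<forall>as. length as = r \<and> set as \<subseteq> X \<and> distinct as \<longrightarrow>
            (\<exists>f. (r, f) \<in> F \<and> f as = as ! 1 \<and>
               (\<forall>bs. length bs = r \<and> set bs \<subseteq> X \<and> \<not> distinct bs \<longrightarrow> f bs = bs ! 0)))"
    and "C \<noteq> {}"
    and "\<forall>c\<in>C. choice_fun X k c"
    and "symmetric_family X k C"
    and "\<forall>(n, f)\<in>F. closed_under X k C n f"
  shows "\<forall>c. choice_fun X k c \<longrightarrow> c \<in> C"
proof -
  have clo: "closed_under X k C r f" if "(r, f) \<in> F" for f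
  proof -
    have "case (r, f) of (n, f) \<Rightarrow> closed_under X k C n f" using assms(12) that by (rule bspec)
    thus ?thesis by simp
  qed
  have patch: "\<forall>as. length as = r \<and> set as \<subseteq> X \<and> distinct as \<longrightarrow>
      (\<exists>f. closed_under X k C r f \<and> f as = as ! 1 \<and>
        (\<forall>bs. length bs = r \<and> set bs \<subseteq> X \<and> \<not> distinct bs \<longrightarrow> f bs = bs ! 0))"
  proof (intro allI impI)
    fix as assume as: "length as = r \<and> set as \<subseteq> X \<and> distinct as"
    from assms(8) show "\<exists>f. closed_under X k C r f \<and> f as = as ! 1 \<and>
        (\<forall>bs. length bs = r \<and> set bs \<subseteq> X \<and> \<not> distinct bs \<longrightarrow> f bs = bs ! 0)"
    proof
      assume "\<exists>f. (r, f) \<in> F \<and> agree_on X r f f_r12"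
      then obtain f where f: "(r, f) \<in> F" "agree_on X r f f_r12" by blast
      have "f as = as ! 1" using f(2) as by (simp add: agree_on_def f_r12_def)
      moreover have "\<forall>bs. length bs = r \<and> set bs \<subseteq> X \<and> \<not> distinct bs \<longrightarrow> f bs = bs ! 0"
        using f(2) by (simp add: agree_on_def f_r12_def)
      ultimately show ?thesis using clo[OF f(1)] by blast
    next
      assume "\<forall>as. length as = r \<and> set as \<subseteq> X \<and> distinct as \<longrightarrow>
            (\<exists>f. (r, f) \<in> F \<and> f as = as ! 1 \<and>
               (\<forall>bs. length bs = r \<and> set bs \<subseteq> X \<and> \<not> distinct bs \<longrightarrow> f bs = bs ! 0))"
      then obtain f where f: "(r, f) \<in> F" "f as = as ! 1"
          "\<forall>bs. length bs = r \<and> set bs \<subseteq> X \<and> \<not> distinct bs \<longrightarrow> f bs = bs ! 0"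
        using as by blast
      thus ?thesis using clo[OF f(1)] by blast
    qed
  qed
  have nk: "card X > k"
  proof -
    have "card X - k \<ge> 7" using assms(5) by simp
    thus ?thesis by simp
  qed
  interpret chs X k r C
    by (rule chs.intro[OF assms(1) assms(2) assms(3) assms(4) nk assms(9) assms(10) assms(11) patch])
  show ?thesis using fullC by blast
qed

end
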